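(* Let $X,Y$ be mm-spaces and $p\in[1,+\infty]$. Then for every $\kappa\in(0,1)$ and $\kappa'\in(0,1/2)$, $$\mathrm{OD}(X\times_p Y;-(\kappa+\kappa'))\le\mathrm{OD}(X;-\kappa)+2\,\mathrm{OD}(Y;-\kappa').$$
   Context: An mm-space is a triple $(X,d_X,m_X)$ with $(X,d_X)$ complete separable metric space and $m_X$ a Borel probability measure. For $p<\infty$, $F_p(s,t)=(s^p+t^p)^{1/p}$, $F_\infty(s,t)=\max\{s,t\}$; $X\times_pY:=(X\times Y,d_{F_p},m_X\otimes m_Y)$ with $d_{F_p}((x,y),(x',y'))=F_p(d_X(x,x'),d_Y(y,y'))$. Partial diameter: $\mathrm{PD}(X;\alpha)$ = infimum of $\operatorname{diam}A$ over Borel $A$ with $m_X(A)\ge\alpha$. Observable diameter: $\mathrm{OD}(X;-\kappa):=\sup_f\mathrm{PD}((\mathbb R,|\cdot|,f_*m_X);1-\kappa)$ over 1-Lipschitz $f\colon X\to\mathbb R$. *)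

theory Defs
  imports "HOL-Analysis.Analysis" "HOL-Probability.Probability"
begin

definition mm_space :: "'a set \<Rightarrow> ('a \<Rightarrow> 'a \<Rightarrow> real) \<Rightarrow> 'a measure \<Rightarrow> bool" where
  "mm_space S d m \<longleftrightarrow>
     Metric_space S d \<and> Metric_space.mcomplete S d \<and>
     separable_space (Metric_space.mtopology S d) \<and>
     space m = S \<and>
     sets m = sigma_sets S {U. openin (Metric_space.mtopology S d) U} \<and>
     prob_space m"

text \<open>Diameter of a set (extended, so unbounded sets have diameter \<open>\<infinity>\<close>).\<close>
definition mdiam :: "('a \<Rightarrow> 'a \<Rightarrow> real) \<Rightarrow> 'a set \<Rightarrow> ennreal" where
  "mdiam d A = (SUP x\<in>A. SUP y\<in>A. ennreal (d x y))"

definition partial_diam :: "('a \<Rightarrow> 'a \<Rightarrow> real) \<Rightarrow> 'a measure \<Rightarrow> real \<Rightarrow> ennreal" where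
  "partial_diam d m \<alpha> = (INF A\<in>{A \<in> sets m. measure m A \<ge> \<alpha>}. mdiam d A)"

definition obs_diam :: "'a set \<Rightarrow> ('a \<Rightarrow> 'a \<Rightarrow> real) \<Rightarrow> 'a measure \<Rightarrow> real \<Rightarrow> ennreal" where
  "obs_diam S d m \<kappa> =
     (SUP f\<in>{f :: 'a \<Rightarrow> real. \<forall>x\<in>S. \<forall>y\<in>S. \<bar>f x - f y\<bar> \<le> d x y}.
        partial_diam (\<lambda>s t. \<bar>s - t\<bar>) (distr m borel f) (1 - \<kappa>))"

definition Fp :: "ereal \<Rightarrow> real \<Rightarrow> real \<Rightarrow> real" where
  "Fp p s t = (if p = \<infinity> then max s t
               else (s powr real_of_ereal p + t powr real_of_ereal p) powr (1 / real_of_ereal p))"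

definition prod_dist_p :: "ereal \<Rightarrow> ('a \<Rightarrow> 'a \<Rightarrow> real) \<Rightarrow> ('b \<Rightarrow> 'b \<Rightarrow> real)
    \<Rightarrow> ('a \<times> 'b) \<Rightarrow> ('a \<times> 'b) \<Rightarrow> real" where
  "prod_dist_p p dX dY u v = Fp p (dX (fst u) (fst v)) (dY (snd u) (snd v))"

end

theory Submission imports Defs begin

lemma powr_sum_le:
  fixes s t q :: real assumes "0 \<le> s" "0 \<le> t" "1 \<le> q"
  shows "s powr q + t powr q \<le> (s + t) powr q"
proof -
  have k: "x powr q = x * x powr (q - 1)" if "0 \<le> x" for x :: real
  proof (cases "x = 0")
    case True then show ?thesis using assms by simp
  next
    case False then have "x > 0" using that by simp
    then show ?thesis by (simp add: powr_diff)
  qed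
  have "s powr (q - 1) \<le> (s+t) powr (q-1)" using assms by (intro powr_mono2) auto
  moreover have "t powr (q - 1) \<le> (s+t) powr (q-1)" using assms by (intro powr_mono2) auto
  ultimately have "s * s powr (q - 1) + t * t powr (q-1) \<le> s * (s+t) powr (q-1) + t * (s+t) powr (q-1)"
    using assms by (intro add_mono mult_left_mono) auto
  also have "\<dots> = (s+t) * (s+t) powr (q-1)" by (simp add: algebra_simps)
  finally show ?thesis using k assms by simp
qed

lemma Fp_le_sum:
  assumes "1 \<le> p" "0 \<le> s" "0 \<le> t"
  shows "Fp p s t \<le> s + t"
proof (cases "p = \<infinity>")
  case True then show ?thesis using assms by (simp add: Fp_def)
next
  case False
  define q where "q = real_of_ereal p"
  have q: "1 \<le> q" using assms False unfolding q_def
    by (cases p) auto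
  have "(s powr q + t powr q) powr (1/q) \<le> ((s + t) powr q) powr (1/q)"
    using powr_sum_le[OF assms(2,3) q] q by (intro powr_mono2) auto
  also have "\<dots> = s + t" using q assms by (simp add: powr_powr)
  finally show ?thesis using False by (simp add: Fp_def q_def)
qed

lemma Fp_zero2:
  assumes "1 \<le> p" "0 \<le> s"
  shows "Fp p s 0 = s" "Fp p 0 s = s"
proof -
  have "p \<noteq> \<infinity> \<Longrightarrow> 1 \<le> real_of_ereal p" using assms by (cases p) auto
  then show "Fp p s 0 = s" "Fp p 0 s = s" using assms
    by (auto simp: Fp_def powr_powr)
qed


lemma lip_measurable:
  assumes ms: "Metric_space T d" and sp: "space M = T"
    and se: "sets M = sigma_sets T {U. openin (Metric_space.mtopology T d) U}"
    and lip: "\<forall>x\<in>T. \<forall>y\<in>T. \<bar>h x - h y\<bar> \<le> d x y"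
  shows "h \<in> borel_measurable M"
proof (rule borel_measurableI)
  interpret Metric_space T d by fact
  fix U :: "real set" assume U: "open U"
  have "openin mtopology (h -` U \<inter> T)"
    unfolding openin_mtopology
  proof (intro conjI allI impI)
    fix x assume x: "x \<in> h -` U \<inter> T"
    then obtain e where e: "e > 0" "ball (h x) e \<subseteq> U" using U open_contains_ball by blast
    have "mball x e \<subseteq> h -` U \<inter> T"
    proof
      fix y assume "y \<in> mball x e"
      then have y: "y \<in> T" "d x y < e" by auto
      then have "\<bar>h x - h y\<bar> < e" using lip x by fastforce
      then have "h y \<in> ball (h x) e" by (simp add: dist_real_def)
      then show "y \<in> h -` U \<inter> T" using e y by auto
    qed
    then show "\<exists>r>0. mball x r \<subseteq> h -` U \<inter> T" using e by blast
  qed auto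
  then show "h -` U \<inter> space M \<in> sets M" unfolding sp se by auto
qed

lemma dense_pt:
  assumes ms: "Metric_space T d" and sep: "separable_space (Metric_space.mtopology T d)"
  obtains D where "countable D" "D \<subseteq> T" "\<And>x r. x \<in> T \<Longrightarrow> r > 0 \<Longrightarrow> \<exists>q\<in>D. d x q < r"
proof -
  interpret Metric_space T d by fact
  obtain C where C: "countable C" "C \<subseteq> T" "mtopology closure_of C = T"
    using sep unfolding separable_space_def by auto
  have "\<exists>q\<in>C. d x q < r" if "x \<in> T" "r > 0" for x r
    using C(3) that unfolding metric_closure_of by auto
  then show ?thesis using that C by blast
qed


lemma prod_measurable:
  assumes X: "mm_space S dX mX" and Y: "mm_space T dY mY"
    and lip: "\<forall>z\<in>S\<times>T. \<forall>w\<in>S\<times>T. \<bar>f z - f w\<bar> \<le> dX (fst z) (fst w) + dY (snd z) (snd w)"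
  shows "f \<in> borel_measurable (mX \<Otimes>\<^sub>M mY)"
proof (rule borel_measurableI)
  have msX: "Metric_space S dX" and msY: "Metric_space T dY"
    using X Y unfolding mm_space_def by auto
  interpret MX: Metric_space S dX by fact
  interpret MY: Metric_space T dY by fact
  obtain DX where DX: "countable DX" "DX \<subseteq> S" "\<And>x r. x \<in> S \<Longrightarrow> r > 0 \<Longrightarrow> \<exists>q\<in>DX. dX x q < r"
    using dense_pt[OF msX] X unfolding mm_space_def by metis
  obtain DY where DY: "countable DY" "DY \<subseteq> T" "\<And>x r. x \<in> T \<Longrightarrow> r > 0 \<Longrightarrow> \<exists>q\<in>DY. dY x q < r"
    using dense_pt[OF msY] Y unfolding mm_space_def by metis
  have spX: "space mX = S" and seX: "sets mX = sigma_sets S {U. openin MX.mtopology U}"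
    using X unfolding mm_space_def by auto
  have spY: "space mY = T" and seY: "sets mY = sigma_sets T {U. openin MY.mtopology U}"
    using Y unfolding mm_space_def by auto
  fix U :: "real set" assume U: "open U"
  define e :: "nat \<Rightarrow> real" where "e n = 1 / (Suc n)" for n
  define R where "R = (\<lambda>(q,r,n). MX.mball q (e n) \<times> MY.mball r (e n)) ` (DX \<times> DY \<times> UNIV)"
  define C where "C = {A \<in> R. A \<subseteq> f -` U \<inter> (S \<times> T)}"
  have cR: "countable R" unfolding R_def using DX DY by auto
  have RS: "R \<subseteq> sets (mX \<Otimes>\<^sub>M mY)"
  proof
    fix A assume "A \<in> R"
    then obtain q r n where A: "A = MX.mball q (e n) \<times> MY.mball r (e n)" unfolding R_def by auto
    have "MX.mball q (e n) \<in> sets mX" unfolding seX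
      by (rule sigma_sets.Basic) auto
    moreover have "MY.mball r (e n) \<in> sets mY" unfolding seY
      by (rule sigma_sets.Basic) auto
    ultimately show "A \<in> sets (mX \<Otimes>\<^sub>M mY)" unfolding A by (rule pair_measureI)
  qed
  have eq: "f -` U \<inter> (S \<times> T) = \<Union>C"
  proof
    show "\<Union>C \<subseteq> f -` U \<inter> (S \<times> T)" unfolding C_def by auto
  next
    show "f -` U \<inter> (S \<times> T) \<subseteq> \<Union>C"
    proof
      fix z assume z: "z \<in> f -` U \<inter> (S \<times> T)"
      obtain x y where xy: "z = (x,y)" by (cases z)
      then have x: "x \<in> S" and y: "y \<in> T" using z by auto
      obtain \<delta> where \<delta>: "\<delta> > 0" "ball (f z) \<delta> \<subseteq> U" using U z open_contains_ball by blast
      obtain n where n: "1 / real (Suc n) < \<delta> / 4" using \<delta> by (metis divide_pos_pos nat_approx_posE zero_less_numeral)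
      have en: "e n > 0" "e n < \<delta> / 4" using n unfolding e_def by auto
      obtain q where q: "q \<in> DX" "dX x q < e n" using DX(3)[OF x en(1)] by auto
      obtain r where r: "r \<in> DY" "dY y r < e n" using DY(3)[OF y en(1)] by auto
      have qS: "q \<in> S" and rT: "r \<in> T" using q r DX DY by auto
      define A where "A = MX.mball q (e n) \<times> MY.mball r (e n)"
      have AR: "A \<in> R" unfolding A_def R_def using q r by force
      have zA: "z \<in> A" unfolding A_def xy using x y q r qS rT MX.commute MY.commute by auto
      have "A \<subseteq> f -` U \<inter> (S \<times> T)"
      proof
        fix w assume "w \<in> A"
        then obtain x' y' where w: "w = (x',y')" "x' \<in> S" "y' \<in> T" "dX q x' < e n" "dY r y' < e n"
          unfolding A_def by auto
        have "dX x x' \<le> dX x q + dX q x'" using MX.triangle x qS w by auto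
        moreover have "dY y y' \<le> dY y r + dY r y'" using MY.triangle y rT w by auto
        moreover have "\<bar>f z - f w\<bar> \<le> dX x x' + dY y y'" using lip z w xy by fastforce
        ultimately have "\<bar>f z - f w\<bar> < \<delta>" using q r w en by linarith
        then have "f w \<in> ball (f z) \<delta>" by (simp add: dist_real_def)
        then show "w \<in> f -` U \<inter> (S \<times> T)" using \<delta> w by auto
      qed
      then show "z \<in> \<Union>C" using AR zA unfolding C_def by auto
    qed
  qed
  have "\<Union>C \<in> sets (mX \<Otimes>\<^sub>M mY)"
    using cR RS unfolding C_def by (intro sets.countable_Union) (auto intro: countable_subset)
  then show "f -` U \<inter> space (mX \<Otimes>\<^sub>M mY) \<in> sets (mX \<Otimes>\<^sub>M mY)"
    using eq spX spY by (simp add: space_pair_measure)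
qed


lemma pd_interval:
  assumes P: "prob_space M" and h: "h \<in> borel_measurable M"
    and pd: "partial_diam (\<lambda>s t. \<bar>s-t\<bar>) (distr M borel h) \<alpha> < ennreal D" and a: "\<alpha> > 0"
  shows "\<exists>l. measure M (h -` {l..l+D} \<inter> space M) \<ge> \<alpha>"
proof -
  interpret prob_space M by fact
  let ?N = "distr M borel h"
  interpret N: prob_space ?N using prob_space_distr[OF h] .
  obtain A where A: "A \<in> sets ?N" "measure ?N A \<ge> \<alpha>" "mdiam (\<lambda>s t. \<bar>s-t\<bar>) A < ennreal D"
    using pd unfolding partial_diam_def INF_less_iff by auto
  have Ane: "A \<noteq> {}" using A a by auto
  then obtain x0 where x0: "x0 \<in> A" by auto
  have dist: "\<bar>x - y\<bar> \<le> D" if "x \<in> A" "y \<in> A" for x y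
  proof -
    have "ennreal \<bar>x - y\<bar> \<le> mdiam (\<lambda>s t. \<bar>s-t\<bar>) A"
      unfolding mdiam_def using that by (intro SUP_upper2[of x] SUP_upper2[of y]) auto
    then have "ennreal \<bar>x - y\<bar> < ennreal D" using A by auto
    then show ?thesis by (simp add: ennreal_less_iff)
  qed
  have bb: "bdd_below A" using dist x0 unfolding bdd_below_def
    by (metis abs_diff_le_iff)
  define l where "l = Inf A"
  have sub: "A \<subseteq> {l..l+D}"
  proof
    fix x assume x: "x \<in> A"
    have "l \<le> x" unfolding l_def using cInf_lower[OF x bb] .
    moreover have "x - D \<le> l" unfolding l_def using Ane
      by (intro cInf_greatest) (use dist x in \<open>auto simp: abs_diff_le_iff\<close>)
    ultimately show "x \<in> {l..l+D}" by auto
  qed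
  have "measure ?N A \<le> measure ?N {l..l+D}"
    by (rule N.finite_measure_mono[OF sub]) auto
  then have "\<alpha> \<le> measure ?N {l..l+D}" using A by auto
  then show ?thesis using h by (subst (asm) measure_distr) auto
qed

lemma mdiam_interval:
  assumes "lo \<le> hi"
  shows "mdiam (\<lambda>s t. \<bar>s-t\<bar>) {lo..hi::real} \<le> ennreal (hi - lo)"
  unfolding mdiam_def
  by (intro SUP_least ennreal_leI) auto


lemma key:
  fixes S :: "'a set" and dX :: "'a \<Rightarrow> 'a \<Rightarrow> real" and mX :: "'a measure"
    and T :: "'b set" and dY :: "'b \<Rightarrow> 'b \<Rightarrow> real" and mY :: "'b measure"
    and p :: ereal and \<kappa> \<kappa>' :: real
  assumes X: "mm_space S dX mX" and Y: "mm_space T dY mY"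
    and p: "1 \<le> p"
    and k: "0 < \<kappa>" "\<kappa> < 1" "0 < \<kappa>'" "\<kappa>' < 1/2"
    and ODX: "obs_diam S dX mX \<kappa> = ennreal a" and ODY: "obs_diam T dY mY \<kappa>' = ennreal b"
    and a: "0 \<le> a" and b: "0 \<le> b" and e: "0 < \<epsilon>"
    and lipf: "\<forall>z\<in>S\<times>T. \<forall>w\<in>S\<times>T. \<bar>f z - f w\<bar> \<le> prod_dist_p p dX dY z w"
  shows "partial_diam (\<lambda>s t. \<bar>s - t\<bar>) (distr (mX \<Otimes>\<^sub>M mY) borel f) (1 - (\<kappa> + \<kappa>'))
          \<le> ennreal (a + 2 * b + 3 * \<epsilon>)"
proof -
  have msX: "Metric_space S dX" and msY: "Metric_space T dY"
    using X Y unfolding mm_space_def by auto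
  interpret MX: Metric_space S dX by fact
  interpret MY: Metric_space T dY by fact
  have spX: "space mX = S" and seX: "sets mX = sigma_sets S {U. openin MX.mtopology U}"
    and PX: "prob_space mX"
    using X unfolding mm_space_def by auto
  have spY: "space mY = T" and seY: "sets mY = sigma_sets T {U. openin MY.mtopology U}"
    and PY: "prob_space mY"
    using Y unfolding mm_space_def by auto
  interpret PX: prob_space mX by fact
  interpret PY: prob_space mY by fact
  have lip2: "\<bar>f (x,y) - f (x',y')\<bar> \<le> Fp p (dX x x') (dY y y')"
    if "x \<in> S" "x' \<in> S" "y \<in> T" "y' \<in> T" for x x' y y'
    using lipf that unfolding prod_dist_p_def by fastforce
  have fmeas: "f \<in> borel_measurable (mX \<Otimes>\<^sub>M mY)"
  proof (rule prod_measurable[OF X Y], intro ballI)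
    fix z w assume zw: "z \<in> S\<times>T" "w \<in> S\<times>T"
    then show "\<bar>f z - f w\<bar> \<le> dX (fst z) (fst w) + dY (snd z) (snd w)"
      using lip2[of "fst z" "fst w" "snd z" "snd w"] Fp_le_sum[OF p, of "dX (fst z) (fst w)" "dY (snd z) (snd w)"]
      by auto
  qed
  have secY: "\<bar>f (x,y) - f (x,y')\<bar> \<le> dY y y'" if "x \<in> S" "y \<in> T" "y' \<in> T" for x y y'
    using lip2[of x x y y'] that Fp_zero2[OF p, of "dY y y'"] by auto
  have secX: "\<bar>f (x,y) - f (x',y)\<bar> \<le> dX x x'" if "x \<in> S" "x' \<in> S" "y \<in> T" for x x' y
    using lip2[of x x' y y] that Fp_zero2[OF p, of "dX x x'"] by auto
  have fxm: "(\<lambda>y. f (x,y)) \<in> borel_measurable mY" if "x \<in> S" for x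
    using secY that by (intro lip_measurable[OF msY spY seY]) auto
  define c where "c = b + \<epsilon>"
  have ex_u: "\<exists>u. measure mY ((\<lambda>y. f (x,y)) -` {u..u+c} \<inter> space mY) \<ge> 1 - \<kappa>'" if x: "x \<in> S" for x
  proof (rule pd_interval[OF PY fxm[OF x]])
    have "partial_diam (\<lambda>s t. \<bar>s - t\<bar>) (distr mY borel (\<lambda>y. f (x,y))) (1 - \<kappa>') \<le> obs_diam T dY mY \<kappa>'"
      unfolding obs_diam_def using secY x by (intro SUP_upper) auto
    also have "\<dots> < ennreal c" using ODY e b unfolding c_def by (simp add: ennreal_less_iff)
    finally show "partial_diam (\<lambda>s t. \<bar>s - t\<bar>) (distr mY borel (\<lambda>y. f (x,y))) (1 - \<kappa>') < ennreal c" .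
  qed (use k in auto)
  define Sx where "Sx x = {t. measure mY {y\<in>T. f (x,y) \<le> t} \<ge> 1/2}" for x
  define g where "g x = Inf (Sx x)" for x
  have setm: "{y\<in>T. f (x,y) \<le> t} \<in> sets mY" if "x \<in> S" for x t
  proof -
    have "{y\<in>space mY. f (x,y) \<le> t} \<in> sets mY" using fxm[OF that] by measurable
    then show ?thesis using spY by simp
  qed
  have props: "u \<le> g x \<and> g x \<le> u + c \<and> bdd_below (Sx x) \<and> u + c \<in> Sx x"
    if x: "x \<in> S" and u: "measure mY ((\<lambda>y. f (x,y)) -` {u..u+c} \<inter> space mY) \<ge> 1 - \<kappa>'" for x u
  proof -
    define A where "A = (\<lambda>y. f (x,y)) -` {u..u+c} \<inter> space mY"
    have Am: "A \<in> sets mY" unfolding A_def using fxm[OF x] by measurable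
    have mA: "measure mY A \<ge> 1 - \<kappa>'" using u A_def by simp
    have vS: "u + c \<in> Sx x"
    proof -
      have "A \<subseteq> {y\<in>T. f (x,y) \<le> u + c}" unfolding A_def using spY by auto
      then have "measure mY A \<le> measure mY {y\<in>T. f (x,y) \<le> u + c}"
        using setm[OF x] by (intro PY.finite_measure_mono) auto
      then show ?thesis unfolding Sx_def using mA k by auto
    qed
    have lb: "u \<le> t" if t: "t \<in> Sx x" for t
    proof (rule ccontr)
      assume "\<not> u \<le> t"
      then have disj: "A \<inter> {y\<in>T. f (x,y) \<le> t} = {}" unfolding A_def by auto
      have "measure mY (A \<union> {y\<in>T. f (x,y) \<le> t}) = measure mY A + measure mY {y\<in>T. f (x,y) \<le> t}"
        using disj Am setm[OF x] by (intro PY.finite_measure_Union) auto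
      moreover have "measure mY (A \<union> {y\<in>T. f (x,y) \<le> t}) \<le> 1" by (rule PY.prob_le_1)
      ultimately show False using t mA k unfolding Sx_def by auto
    qed
    have bb: "bdd_below (Sx x)" using lb unfolding bdd_below_def by auto
    have "g x \<le> u + c" unfolding g_def by (rule cInf_lower[OF vS bb])
    moreover have "u \<le> g x" unfolding g_def using vS by (intro cInf_greatest lb) auto
    ultimately show ?thesis using bb vS by auto
  qed
  have glip1: "g x' \<le> g x + dX x x'" if xx: "x \<in> S" "x' \<in> S" for x x'
  proof -
    obtain u where u: "measure mY ((\<lambda>y. f (x,y)) -` {u..u+c} \<inter> space mY) \<ge> 1 - \<kappa>'" using ex_u xx by blast
    obtain u' where u': "measure mY ((\<lambda>y. f (x',y)) -` {u'..u'+c} \<inter> space mY) \<ge> 1 - \<kappa>'" using ex_u xx by blast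
    note P = props[OF xx(1) u] and P' = props[OF xx(2) u']
    have "g x' - dX x x' \<le> g x" unfolding g_def
    proof (rule cInf_greatest)
      show "Sx x \<noteq> {}" using P by auto
      fix t assume t: "t \<in> Sx x"
      have "{y\<in>T. f (x,y) \<le> t} \<subseteq> {y\<in>T. f (x',y) \<le> t + dX x x'}"
        using secX xx by (force simp: abs_le_iff)
      then have "measure mY {y\<in>T. f (x,y) \<le> t} \<le> measure mY {y\<in>T. f (x',y) \<le> t + dX x x'}"
        using setm xx by (intro PY.finite_measure_mono) auto
      then have "t + dX x x' \<in> Sx x'" using t unfolding Sx_def by auto
      then have "Inf (Sx x') \<le> t + dX x x'" using P' by (intro cInf_lower) auto
      then show "Inf (Sx x') - dX x x' \<le> t" by simp
    qed
    then show ?thesis by simp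
  qed
  have glip: "\<bar>g x - g x'\<bar> \<le> dX x x'" if "x \<in> S" "x' \<in> S" for x x'
    using glip1[OF that] glip1[of x' x] that MX.commute[of x x'] by auto
  have gm: "g \<in> borel_measurable mX"
    using glip by (intro lip_measurable[OF msX spX seX]) auto
  obtain l where l: "measure mX (g -` {l..l+(a+\<epsilon>)} \<inter> space mX) \<ge> 1 - \<kappa>"
  proof -
    have "\<exists>l. measure mX (g -` {l..l+(a+\<epsilon>)} \<inter> space mX) \<ge> 1 - \<kappa>"
    proof (rule pd_interval[OF PX gm])
      have "partial_diam (\<lambda>s t. \<bar>s - t\<bar>) (distr mX borel g) (1 - \<kappa>) \<le> obs_diam S dX mX \<kappa>"
        unfolding obs_diam_def using glip by (intro SUP_upper) auto
      also have "\<dots> < ennreal (a+\<epsilon>)" using ODX e a by (simp add: ennreal_less_iff)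
      finally show "partial_diam (\<lambda>s t. \<bar>s - t\<bar>) (distr mX borel g) (1 - \<kappa>) < ennreal (a+\<epsilon>)" .
    qed (use k in auto)
    then show ?thesis using that by blast
  qed
  define G where "G = g -` {l..l+(a+\<epsilon>)} \<inter> space mX"
  have Gm: "G \<in> sets mX" unfolding G_def using gm by measurable
  define E where "E = {z\<in>space (mX \<Otimes>\<^sub>M mY). g (fst z) \<in> {l..l+(a+\<epsilon>)} \<and> \<bar>f z - g (fst z)\<bar> \<le> c}"
  have gfm: "(\<lambda>z. g (fst z)) \<in> borel_measurable (mX \<Otimes>\<^sub>M mY)"
    using gm by measurable
  have Em: "E \<in> sets (mX \<Otimes>\<^sub>M mY)" unfolding E_def using gfm fmeas by measurable
  interpret PXY: pair_sigma_finite mX mY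
    by (simp add: PX PY pair_sigma_finite.intro prob_space_imp_sigma_finite)
  have PXY: "prob_space (mX \<Otimes>\<^sub>M mY)" using prob_space_pair[OF PX PY] .
  interpret PP: prob_space "mX \<Otimes>\<^sub>M mY" by fact
  have "emeasure (mX \<Otimes>\<^sub>M mY) E = (\<integral>\<^sup>+x. emeasure mY (Pair x -` E) \<partial>mX)"
    by (rule PY.emeasure_pair_measure_alt[OF Em])
  also have "\<dots> \<ge> (\<integral>\<^sup>+x. ennreal (1 - \<kappa>') * indicator G x \<partial>mX)"
  proof (rule nn_integral_mono)
    fix x assume x: "x \<in> space mX"
    show "ennreal (1 - \<kappa>') * indicator G x \<le> emeasure mY (Pair x -` E)"
    proof (cases "x \<in> G")
      case False then show ?thesis by simp
    next
      case True
      have xS: "x \<in> S" using x spX by auto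
      obtain u where u: "measure mY ((\<lambda>y. f (x,y)) -` {u..u+c} \<inter> space mY) \<ge> 1 - \<kappa>'" using ex_u xS by blast
      note P = props[OF xS u]
      have sub: "(\<lambda>y. f (x,y)) -` {u..u+c} \<inter> space mY \<subseteq> Pair x -` E"
        using True P xS unfolding E_def G_def by (auto simp: space_pair_measure spX spY abs_le_iff)
      have "ennreal (1 - \<kappa>') \<le> emeasure mY ((\<lambda>y. f (x,y)) -` {u..u+c} \<inter> space mY)"
        using u by (simp add: PY.emeasure_eq_measure)
      also have "\<dots> \<le> emeasure mY (Pair x -` E)"
        by (rule emeasure_mono[OF sub]) (rule sets_Pair1[OF Em])
      finally show ?thesis using True by simp
    qed
  qed
  also have "(\<integral>\<^sup>+x. ennreal (1 - \<kappa>') * indicator G x \<partial>mX) = ennreal (1 - \<kappa>') * emeasure mX G"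
    using Gm by (rule nn_integral_cmult_indicator)
  finally have "ennreal (1 - \<kappa>') * ennreal (1 - \<kappa>) \<le> emeasure (mX \<Otimes>\<^sub>M mY) E"
    using l unfolding G_def[symmetric] PX.emeasure_eq_measure
    by (meson ennreal_leI mult_left_mono order_trans zero_le)
  then have mE: "(1 - \<kappa>') * (1 - \<kappa>) \<le> measure (mX \<Otimes>\<^sub>M mY) E"
    using k by (simp add: PP.emeasure_eq_measure ennreal_mult'[symmetric] ennreal_le_iff)
  define B where "B = {l - c .. l + (a+\<epsilon>) + c}"
  have EB: "E \<subseteq> f -` B \<inter> space (mX \<Otimes>\<^sub>M mY)" unfolding E_def B_def by (auto simp: abs_le_iff)
  have "measure (mX \<Otimes>\<^sub>M mY) E \<le> measure (mX \<Otimes>\<^sub>M mY) (f -` B \<inter> space (mX \<Otimes>\<^sub>M mY))"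
    using EB fmeas unfolding B_def by (intro PP.finite_measure_mono) auto
  moreover have "1 - (\<kappa> + \<kappa>') \<le> (1 - \<kappa>') * (1 - \<kappa>)"
    using k by (simp add: algebra_simps)
  ultimately have mB: "1 - (\<kappa> + \<kappa>') \<le> measure (distr (mX \<Otimes>\<^sub>M mY) borel f) B"
    using mE fmeas unfolding B_def by (subst measure_distr) auto
  have "partial_diam (\<lambda>s t. \<bar>s - t\<bar>) (distr (mX \<Otimes>\<^sub>M mY) borel f) (1 - (\<kappa> + \<kappa>')) \<le> mdiam (\<lambda>s t. \<bar>s - t\<bar>) B"
    unfolding partial_diam_def using mB by (intro INF_lower) (auto simp: B_def)
  also have "\<dots> \<le> ennreal (l + (a+\<epsilon>) + c - (l - c))"
    unfolding B_def using a b e c_def by (intro mdiam_interval) auto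
  also have "l + (a+\<epsilon>) + c - (l - c) = a + 2 * b + 3 * \<epsilon>" unfolding c_def by simp
  finally show ?thesis .
qed


theorem mainTheorem8:
  fixes S :: "'a set" and dX :: "'a \<Rightarrow> 'a \<Rightarrow> real" and mX :: "'a measure"
    and T :: "'b set" and dY :: "'b \<Rightarrow> 'b \<Rightarrow> real" and mY :: "'b measure"
    and p :: ereal and \<kappa> \<kappa>' :: real
  assumes "mm_space S dX mX" and "mm_space T dY mY"
    and "1 \<le> p"
    and "0 < \<kappa>" and "\<kappa> < 1" and "0 < \<kappa>'" and "\<kappa>' < 1/2"
  shows "obs_diam (S \<times> T) (prod_dist_p p dX dY) (mX \<Otimes>\<^sub>M mY) (\<kappa> + \<kappa>')
           \<le> obs_diam S dX mX \<kappa> + 2 * obs_diam T dY mY \<kappa>'"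
proof (cases "obs_diam S dX mX \<kappa> = top \<or> obs_diam T dY mY \<kappa>' = top")
  case True
  then show ?thesis by (auto simp: ennreal_mult_top)
next
  case False
  then obtain a b where a: "obs_diam S dX mX \<kappa> = ennreal a" "0 \<le> a"
    and b: "obs_diam T dY mY \<kappa>' = ennreal b" "0 \<le> b"
    by (metis ennreal_cases)
  show ?thesis
  proof (rule ennreal_le_epsilon)
    fix \<epsilon> :: real assume e: "0 < \<epsilon>"
    have "obs_diam (S \<times> T) (prod_dist_p p dX dY) (mX \<Otimes>\<^sub>M mY) (\<kappa> + \<kappa>') \<le> ennreal (a + 2 * b + 3 * (\<epsilon>/3))"
      unfolding obs_diam_def[of "S \<times> T"]
    proof (rule SUP_least)
      fix f assume "f \<in> {f. \<forall>x\<in>S \<times> T. \<forall>y\<in>S \<times> T. \<bar>f x - f y\<bar> \<le> prod_dist_p p dX dY x y}"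
      then show "partial_diam (\<lambda>s t. \<bar>s - t\<bar>) (distr (mX \<Otimes>\<^sub>M mY) borel f) (1 - (\<kappa> + \<kappa>')) \<le> ennreal (a + 2 * b + 3 * (\<epsilon>/3))"
        using assms a b e by (intro key) auto
    qed
    also have "ennreal (a + 2 * b + 3 * (\<epsilon>/3)) = obs_diam S dX mX \<kappa> + 2 * obs_diam T dY mY \<kappa>' + ennreal \<epsilon>"
      using a b e by (simp add: ennreal_plus ennreal_mult ennreal_numeral[symmetric] del: ennreal_numeral)
    finally show "obs_diam (S \<times> T) (prod_dist_p p dX dY) (mX \<Otimes>\<^sub>M mY) (\<kappa> + \<kappa>') \<le> obs_diam S dX mX \<kappa> + 2 * obs_diam T dY mY \<kappa>' + ennreal \<epsilon>" .
  qed
qed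

end
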